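(* Let $n\ge2$, $\kappa\ge1$, and identify $\mathcal G_{[n;\kappa]}$ with $\mathbb R^{n\kappa^n}$ (standard inner product). Then the subspaces $\mathcal S_{[n;\kappa]}$ and $\mathcal K_{[n;\kappa]}$ are orthogonal, and: (1) if $n>\kappa+1$, then $\mathcal G_{[n;\kappa]}=\mathcal S_{[n;\kappa]}\oplus\mathcal E_{[n;\kappa]}$; (2) if $n\le\kappa+1$, then $\mathcal G_{[n;\kappa]}=\mathcal S_{[n;\kappa]}\oplus\mathcal K_{[n;\kappa]}\oplus\mathcal E_{[n;\kappa]}$, where $\oplus$ denotes a direct sum of mutually orthogonal subspaces.
   Context: A finite game $G\in\mathcal G_{[n;\kappa]}$ has players $\{1,\dots,n\}$, each with strategy set $\{1,\dots,\kappa\}$ (strategy $j$ identified with $\delta_\kappa^j$, the $j$-th column of $I_\kappa$), and payoffs $c_i$; $V_i^c\in\mathbb R^{\kappa^n}$ is the row vector with $c_i(x_1,\dots,x_n)=V_i^c(x_1\otimes\cdots\otimes x_n)$, and the structure vector $V_G=[V_1^c,\dots,V_n^c]$ identifies $\mathcal G_{[n;\kappa]}$ with $\mathbb R^{n\kappa^n}$. $G$ is symmetric if for all $\sigma\in\mathbf S_n$, all $i$ and all profiles, $c_i(x_1,\dots,x_n)=c_{\sigma(i)}(x_{\sigma^{-1}(1)},\dots,x_{\sigma^{-1}(n)})$, and skew-symmetric if $c_i(x_1,\dots,x_n)=\mathrm{sgn}(\sigma)c_{\sigma(i)}(x_{\sigma^{-1}(1)},\dots,x_{\sigma^{-1}(n)})$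 for all such $\sigma,i$ and profiles. $\mathcal S_{[n;\kappa]}$, $\mathcal K_{[n;\kappa]}$ are the subspaces of symmetric and skew-symmetric games, and $\mathcal E_{[n;\kappa]}$ (asymmetric games) is the orthogonal complement of $\mathcal S_{[n;\kappa]}\cup\mathcal K_{[n;\kappa]}$ in $\mathbb R^{n\kappa^n}$. *)

theory Defs
  imports Complex_Main "HOL-Combinatorics.Permutations"
begin

text \<open>A strategy profile is a function
  x :: nat => nat with x i in {1..kappa} for i in {1..n} and x i = 0 elsewhere
  (a canonical extension so that profiles are determined by their values on players).\<close>

definition profiles :: "nat \<Rightarrow> nat \<Rightarrow> (nat \<Rightarrow> nat) set" where
  "profiles n \<kappa> = {x. (\<forall>i\<in>{1..n}. x i \<in> {1..\<kappa>}) \<and> (\<forall>i. i \<notin> {1..n} \<longrightarrow> x i = 0)}"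

text \<open>A game in G[n;kappa]: payoff c i x of player i at profile x; values outside the
  players/profiles are fixed to 0, so games correspond bijectively to R^(n kappa^n).\<close>

definition games :: "nat \<Rightarrow> nat \<Rightarrow> (nat \<Rightarrow> (nat \<Rightarrow> nat) \<Rightarrow> real) set" where
  "games n \<kappa> = {c. \<forall>i x. (i \<notin> {1..n} \<or> x \<notin> profiles n \<kappa>) \<longrightarrow> c i x = 0}"

definition game_inner :: "nat \<Rightarrow> nat \<Rightarrow> (nat \<Rightarrow> (nat \<Rightarrow> nat) \<Rightarrow> real)
    \<Rightarrow> (nat \<Rightarrow> (nat \<Rightarrow> nat) \<Rightarrow> real) \<Rightarrow> real" where
  "game_inner n \<kappa> c d = (\<Sum>i\<in>{1..n}. \<Sum>x\<in>profiles n \<kappa>. c i x * d i x)"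

definition symmetric_games :: "nat \<Rightarrow> nat \<Rightarrow> (nat \<Rightarrow> (nat \<Rightarrow> nat) \<Rightarrow> real) set" where
  "symmetric_games n \<kappa> = {c \<in> games n \<kappa>. \<forall>\<sigma>. \<sigma> permutes {1..n} \<longrightarrow>
     (\<forall>i\<in>{1..n}. \<forall>x\<in>profiles n \<kappa>. c i x = c (\<sigma> i) (x \<circ> inv \<sigma>))}"

definition skew_symmetric_games :: "nat \<Rightarrow> nat \<Rightarrow> (nat \<Rightarrow> (nat \<Rightarrow> nat) \<Rightarrow> real) set" where
  "skew_symmetric_games n \<kappa> = {c \<in> games n \<kappa>. \<forall>\<sigma>. \<sigma> permutes {1..n} \<longrightarrow>
     (\<forall>i\<in>{1..n}. \<forall>x\<in>profiles n \<kappa>. c i x = of_int (sign \<sigma>) * c (\<sigma> i) (x \<circ> inv \<sigma>))}"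

definition asymmetric_games :: "nat \<Rightarrow> nat \<Rightarrow> (nat \<Rightarrow> (nat \<Rightarrow> nat) \<Rightarrow> real) set" where
  "asymmetric_games n \<kappa> = {c \<in> games n \<kappa>.
     \<forall>d \<in> symmetric_games n \<kappa> \<union> skew_symmetric_games n \<kappa>. game_inner n \<kappa> c d = 0}"

definition game_orth :: "nat \<Rightarrow> nat \<Rightarrow> (nat \<Rightarrow> (nat \<Rightarrow> nat) \<Rightarrow> real) set
    \<Rightarrow> (nat \<Rightarrow> (nat \<Rightarrow> nat) \<Rightarrow> real) set \<Rightarrow> bool" where
  "game_orth n \<kappa> A B \<longleftrightarrow> (\<forall>a\<in>A. \<forall>b\<in>B. game_inner n \<kappa> a b = 0)"

text \<open>Orthogonal direct sums (orthogonality makes the sums direct).\<close>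

definition orth_dsum2 where
  "orth_dsum2 n \<kappa> A B \<longleftrightarrow>
     games n \<kappa> = {(\<lambda>i x. a i x + b i x) | a b. a \<in> A \<and> b \<in> B} \<and> game_orth n \<kappa> A B"

definition orth_dsum3 where
  "orth_dsum3 n \<kappa> A B C \<longleftrightarrow>
     games n \<kappa> = {(\<lambda>i x. a i x + b i x + c i x) | a b c. a \<in> A \<and> b \<in> B \<and> c \<in> C} \<and>
     game_orth n \<kappa> A B \<and> game_orth n \<kappa> A C \<and> game_orth n \<kappa> B C"

end

theory Submission
  imports Defs
begin

definition act :: "(nat \<Rightarrow> nat) \<Rightarrow> (nat \<Rightarrow> (nat \<Rightarrow> nat) \<Rightarrow> real) \<Rightarrow> (nat \<Rightarrow> (nat \<Rightarrow> nat) \<Rightarrow> real)" where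
  "act \<sigma> c = (\<lambda>i x. c (\<sigma> i) (x \<circ> inv \<sigma>))"

lemma profiles_comp:
  assumes "\<sigma> permutes {1..n}" "x \<in> profiles n \<kappa>"
  shows "x \<circ> \<sigma> \<in> profiles n \<kappa>"
proof -
  have a: "\<And>i. i \<in> {1..n} \<Longrightarrow> \<sigma> i \<in> {1..n}" using permutes_in_image[OF assms(1)] by blast
  have b: "\<And>i. i \<notin> {1..n} \<Longrightarrow> \<sigma> i = i" using permutes_not_in[OF assms(1)] by blast
  have c: "\<forall>i\<in>{1..n}. x i \<in> {1..\<kappa>}" "\<forall>i. i \<notin> {1..n} \<longrightarrow> x i = 0"
    using assms(2) unfolding profiles_def by auto
  have "\<forall>i\<in>{1..n}. (x \<circ> \<sigma>) i \<in> {1..\<kappa>}" using a c(1) by simp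
  moreover have "\<forall>i. i \<notin> {1..n} \<longrightarrow> (x \<circ> \<sigma>) i = 0" using b c(2) by simp
  ultimately show ?thesis unfolding profiles_def by blast
qed

lemma profiles_inv_iff:
  assumes "\<sigma> permutes {1..n}"
  shows "(x \<circ> inv \<sigma> \<in> profiles n \<kappa>) = (x \<in> profiles n \<kappa>)"
proof
  assume "x \<circ> inv \<sigma> \<in> profiles n \<kappa>"
  from profiles_comp[OF assms this] show "x \<in> profiles n \<kappa>"
    by (simp add: comp_assoc permutes_inv_o[OF assms])
next
  assume "x \<in> profiles n \<kappa>"
  from profiles_comp[OF permutes_inv[OF assms] this] show "x \<circ> inv \<sigma> \<in> profiles n \<kappa>" .
qed

lemma bij_profiles:
  assumes "\<sigma> permutes {1..n}"
  shows "bij_betw (\<lambda>x. x \<circ> inv \<sigma>) (profiles n \<kappa>) (profiles n \<kappa>)"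
  apply (rule bij_betw_byWitness[where f'="\<lambda>x. x \<circ> \<sigma>"])
  using assms profiles_inv_iff[OF assms] profiles_comp[OF assms]
  by (auto simp: comp_assoc permutes_inv_o[OF assms])

lemma inner_act:
  assumes "\<sigma> permutes {1..n}"
  shows "game_inner n \<kappa> (act \<sigma> c) (act \<sigma> d) = game_inner n \<kappa> c d"
proof -
  have "game_inner n \<kappa> (act \<sigma> c) (act \<sigma> d) =
     (\<Sum>i\<in>{1..n}. \<Sum>y\<in>profiles n \<kappa>. c (\<sigma> i) y * d (\<sigma> i) y)"
    unfolding game_inner_def act_def
    by (intro sum.cong refl sum.reindex_bij_betw[OF bij_profiles[OF assms]])
  also have "\<dots> = game_inner n \<kappa> c d"
    unfolding game_inner_def
    by (rule sum.reindex_bij_betw[OF permutes_imp_bij[OF assms], where g="\<lambda>j. \<Sum>y\<in>profiles n \<kappa>. c j y * d j y"])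
  finally show ?thesis .
qed

lemma inner_cong:
  assumes "\<And>i x. i \<in> {1..n} \<Longrightarrow> x \<in> profiles n \<kappa> \<Longrightarrow> c i x = c' i x"
    and "\<And>i x. i \<in> {1..n} \<Longrightarrow> x \<in> profiles n \<kappa> \<Longrightarrow> d i x = d' i x"
  shows "game_inner n \<kappa> c d = game_inner n \<kappa> c' d'"
  unfolding game_inner_def using assms by (intro sum.cong refl) auto

lemma inner_comm: "game_inner n \<kappa> c d = game_inner n \<kappa> d c"
  unfolding game_inner_def by (simp add: mult.commute)

lemma inner_sum_left:
  "game_inner n \<kappa> (\<lambda>i x. \<Sum>a\<in>A. f a i x) d = (\<Sum>a\<in>A. game_inner n \<kappa> (f a) d)"
  unfolding game_inner_def sum_distrib_right
  by (simp add: sum.swap[of _ A])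

lemma inner_scale_left:
  "game_inner n \<kappa> (\<lambda>i x. r * c i x) d = r * game_inner n \<kappa> c d"
  unfolding game_inner_def by (simp add: sum_distrib_left mult.assoc)

lemma inner_neg_right:
  "game_inner n \<kappa> c (\<lambda>i x. - d i x) = - game_inner n \<kappa> c d"
  unfolding game_inner_def by (simp add: sum_negf)

lemma inner_diff_left:
  "game_inner n \<kappa> (\<lambda>i x. c i x - a i x - b i x) d
     = game_inner n \<kappa> c d - game_inner n \<kappa> a d - game_inner n \<kappa> b d"
  unfolding game_inner_def by (simp add: left_diff_distrib sum_subtractf)

lemma sym_act:
  assumes "c \<in> symmetric_games n \<kappa>" "\<sigma> permutes {1..n}" "i \<in> {1..n}" "x \<in> profiles n \<kappa>"
  shows "act \<sigma> c i x = c i x"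
  using assms unfolding symmetric_games_def act_def by auto

lemma skew_act:
  assumes "c \<in> skew_symmetric_games n \<kappa>" "\<sigma> permutes {1..n}" "i \<in> {1..n}" "x \<in> profiles n \<kappa>"
  shows "c i x = of_int (sign \<sigma>) * act \<sigma> c i x"
  using assms unfolding skew_symmetric_games_def act_def by auto

lemma act_games:
  assumes "c \<in> games n \<kappa>" "\<sigma> permutes {1..n}" "i \<notin> {1..n} \<or> x \<notin> profiles n \<kappa>"
  shows "act \<sigma> c i x = 0"
proof -
  have "\<sigma> i \<notin> {1..n} \<or> x \<circ> inv \<sigma> \<notin> profiles n \<kappa>"
    using assms(3) permutes_in_image[OF assms(2)] profiles_inv_iff[OF assms(2)] by auto
  then show ?thesis using assms(1) unfolding games_def act_def by auto
qed

lemma act_comp: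
  assumes "\<sigma> permutes {1..n}" "\<rho> permutes {1..n}"
  shows "act \<rho> (act \<sigma> c) = act (\<sigma> \<circ> \<rho>) c"
  unfolding act_def
  using o_inv_distrib[OF permutes_bij[OF assms(1)] permutes_bij[OF assms(2)]]
  by (simp add: o_assoc)

lemma orth_SK:
  assumes "n \<ge> 2" "a \<in> symmetric_games n \<kappa>" "b \<in> skew_symmetric_games n \<kappa>"
  shows "game_inner n \<kappa> a b = 0"
proof -
  define \<tau> where "\<tau> = Transposition.transpose (1::nat) 2"
  have tp: "\<tau> permutes {1..n}" unfolding \<tau>_def using assms(1) by (intro permutes_swap_id) auto
  have sg: "sign \<tau> = -1" unfolding \<tau>_def by (simp add: sign_swap_id)
  have "game_inner n \<kappa> a b = game_inner n \<kappa> (act \<tau> a) (act \<tau> b)"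
    using inner_act[OF tp] by simp
  also have "\<dots> = game_inner n \<kappa> a (\<lambda>i x. - b i x)"
    apply (rule inner_cong)
    using sym_act[OF assms(2) tp] skew_act[OF assms(3) tp] sg by auto
  also have "\<dots> = - game_inner n \<kappa> a b" by (rule inner_neg_right)
  finally show ?thesis by simp
qed

definition Pj where
  "Pj n c = (\<lambda>i x. (1 / fact n) * (\<Sum>\<sigma>\<in>{\<sigma>. \<sigma> permutes {1..n}}. act \<sigma> c i x))"

definition Qj where
  "Qj n c = (\<lambda>i x. (1 / fact n) * (\<Sum>\<sigma>\<in>{\<sigma>. \<sigma> permutes {1..n}}. of_int (sign \<sigma>) * act \<sigma> c i x))"

lemma card_perms: "card {\<sigma>. \<sigma> permutes {1..n}} = fact n"
  by (rule card_permutations) auto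

lemma Pj_sym:
  assumes "c \<in> games n \<kappa>"
  shows "Pj n c \<in> symmetric_games n \<kappa>"
  unfolding symmetric_games_def
proof (intro CollectI conjI allI impI ballI)
  show "Pj n c \<in> games n \<kappa>"
    unfolding games_def Pj_def using act_games[OF assms] by simp
next
  fix \<rho> i x assume r: "\<rho> permutes {1..n}"
  have "(\<Sum>\<sigma>\<in>{\<sigma>. \<sigma> permutes {1..n}}. act \<sigma> c (\<rho> i) (x \<circ> inv \<rho>))
      = (\<Sum>\<sigma>\<in>{\<sigma>. \<sigma> permutes {1..n}}. act \<rho> (act \<sigma> c) i x)"
    by (simp add: act_def)
  also have "\<dots> = (\<Sum>\<sigma>\<in>{\<sigma>. \<sigma> permutes {1..n}}. act (\<sigma> \<circ> \<rho>) c i x)"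
    using act_comp[OF _ r] by (intro sum.cong) auto
  also have "\<dots> = (\<Sum>\<sigma>\<in>{\<sigma>. \<sigma> permutes {1..n}}. act \<sigma> c i x)"
    using sum_permutations_compose_right[OF r, of "\<lambda>\<sigma>. act \<sigma> c i x"] by simp
  finally show "Pj n c i x = Pj n c (\<rho> i) (x \<circ> inv \<rho>)" unfolding Pj_def by simp
qed

lemma Qj_skew:
  assumes "c \<in> games n \<kappa>"
  shows "Qj n c \<in> skew_symmetric_games n \<kappa>"
  unfolding skew_symmetric_games_def
proof (intro CollectI conjI allI impI ballI)
  show "Qj n c \<in> games n \<kappa>"
    unfolding games_def Qj_def using act_games[OF assms] by simp
next
  fix \<rho> i x assume r: "\<rho> permutes {1..n}"
  have pr: "permutation \<rho>" using r by (simp add: permutes_imp_permutation[OF finite_atLeastAtMost])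
  have "of_int (sign \<rho>) * (\<Sum>\<sigma>\<in>{\<sigma>. \<sigma> permutes {1..n}}. of_int (sign \<sigma>) * act \<sigma> c (\<rho> i) (x \<circ> inv \<rho>))
      = (\<Sum>\<sigma>\<in>{\<sigma>. \<sigma> permutes {1..n}}. of_int (sign \<rho>) * of_int (sign \<sigma>) * act \<rho> (act \<sigma> c) i x)"
    by (simp add: act_def sum_distrib_left mult.assoc)
  also have "\<dots> = (\<Sum>\<sigma>\<in>{\<sigma>. \<sigma> permutes {1..n}}. of_int (sign (\<sigma> \<circ> \<rho>)) * act (\<sigma> \<circ> \<rho>) c i x)"
  proof (intro sum.cong refl)
    fix \<sigma> assume "\<sigma> \<in> {\<sigma>. \<sigma> permutes {1..n}}"
    then have s: "\<sigma> permutes {1..n}" by simp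
    have "sign (\<sigma> \<circ> \<rho>) = sign \<sigma> * sign \<rho>"
      using sign_compose[OF permutes_imp_permutation[OF finite_atLeastAtMost s] pr] by simp
    then show "of_int (sign \<rho>) * of_int (sign \<sigma>) * act \<rho> (act \<sigma> c) i x
        = of_int (sign (\<sigma> \<circ> \<rho>)) * act (\<sigma> \<circ> \<rho>) c i x"
      using act_comp[OF s r] by (simp add: mult.commute)
  qed
  also have "\<dots> = (\<Sum>\<sigma>\<in>{\<sigma>. \<sigma> permutes {1..n}}. of_int (sign \<sigma>) * act \<sigma> c i x)"
    using sum_permutations_compose_right[OF r, of "\<lambda>\<sigma>. of_int (sign \<sigma>) * act \<sigma> c i x"] by simp
  finally show "Qj n c i x = of_int (sign \<rho>) * Qj n c (\<rho> i) (x \<circ> inv \<rho>)"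
    unfolding Qj_def by (simp add: algebra_simps)
qed

lemma inner_scale_right:
  "game_inner n \<kappa> c (\<lambda>i x. r * d i x) = r * game_inner n \<kappa> c d"
  using inner_scale_left[of n \<kappa> r d c] inner_comm by metis

lemma sym_games: "c \<in> symmetric_games n \<kappa> \<Longrightarrow> c \<in> games n \<kappa>"
  unfolding symmetric_games_def by simp

lemma skew_games: "c \<in> skew_symmetric_games n \<kappa> \<Longrightarrow> c \<in> games n \<kappa>"
  unfolding skew_symmetric_games_def by simp

lemma inner_Pj_sym:
  assumes "d \<in> symmetric_games n \<kappa>"
  shows "game_inner n \<kappa> (Pj n c) d = game_inner n \<kappa> c d"
proof -
  have "game_inner n \<kappa> (Pj n c) d
      = (1 / fact n) * (\<Sum>\<sigma>\<in>{\<sigma>. \<sigma> permutes {1..n}}. game_inner n \<kappa> (act \<sigma> c) d)"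
    unfolding Pj_def inner_scale_left inner_sum_left ..
  also have "\<dots> = (1 / fact n) * (\<Sum>\<sigma>\<in>{\<sigma>. \<sigma> permutes {1..n}}. game_inner n \<kappa> c d)"
  proof (intro arg_cong[where f="\<lambda>t. (1 / fact n) * t"] sum.cong refl)
    fix \<sigma> assume "\<sigma> \<in> {\<sigma>. \<sigma> permutes {1..n}}"
    then have s: "\<sigma> permutes {1..n}" by simp
    have "game_inner n \<kappa> (act \<sigma> c) d = game_inner n \<kappa> (act \<sigma> c) (act \<sigma> d)"
      by (rule inner_cong) (auto simp: sym_act[OF assms s])
    then show "game_inner n \<kappa> (act \<sigma> c) d = game_inner n \<kappa> c d" using inner_act[OF s] by simp
  qed
  also have "\<dots> = game_inner n \<kappa> c d" using card_perms[of n] by simp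
  finally show ?thesis .
qed

lemma inner_Qj_skew:
  assumes "d \<in> skew_symmetric_games n \<kappa>"
  shows "game_inner n \<kappa> (Qj n c) d = game_inner n \<kappa> c d"
proof -
  have "game_inner n \<kappa> (Qj n c) d
      = (1 / fact n) * (\<Sum>\<sigma>\<in>{\<sigma>. \<sigma> permutes {1..n}}. of_int (sign \<sigma>) * game_inner n \<kappa> (act \<sigma> c) d)"
    unfolding Qj_def inner_scale_left inner_sum_left ..
  also have "\<dots> = (1 / fact n) * (\<Sum>\<sigma>\<in>{\<sigma>. \<sigma> permutes {1..n}}. game_inner n \<kappa> c d)"
  proof (intro arg_cong[where f="\<lambda>t. (1 / fact n) * t"] sum.cong refl)
    fix \<sigma> assume "\<sigma> \<in> {\<sigma>. \<sigma> permutes {1..n}}"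
    then have s: "\<sigma> permutes {1..n}" by simp
    have "game_inner n \<kappa> (act \<sigma> c) d = game_inner n \<kappa> (act \<sigma> c) (\<lambda>i x. of_int (sign \<sigma>) * act \<sigma> d i x)"
      by (rule inner_cong) (auto simp: skew_act[OF assms s, symmetric])
    also have "\<dots> = of_int (sign \<sigma>) * game_inner n \<kappa> c d"
      by (simp add: inner_scale_right inner_act[OF s])
    finally have "game_inner n \<kappa> (act \<sigma> c) d = of_int (sign \<sigma>) * game_inner n \<kappa> c d" .
    then show "of_int (sign \<sigma>) * game_inner n \<kappa> (act \<sigma> c) d = game_inner n \<kappa> c d"
      by (simp add: mult.assoc[symmetric] of_int_mult[symmetric])
  qed
  also have "\<dots> = game_inner n \<kappa> c d" using card_perms[of n] by simp
  finally show ?thesis .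
qed

lemma decomp:
  assumes "n \<ge> 2" "c \<in> games n \<kappa>"
  shows "(\<lambda>i x. c i x - Pj n c i x - Qj n c i x) \<in> asymmetric_games n \<kappa>"
proof -
  have P: "Pj n c \<in> symmetric_games n \<kappa>" by (rule Pj_sym[OF assms(2)])
  have Q: "Qj n c \<in> skew_symmetric_games n \<kappa>" by (rule Qj_skew[OF assms(2)])
  have g: "(\<lambda>i x. c i x - Pj n c i x - Qj n c i x) \<in> games n \<kappa>"
    using assms(2) sym_games[OF P] skew_games[OF Q] unfolding games_def by auto
  show ?thesis unfolding asymmetric_games_def
  proof (intro CollectI conjI g ballI)
    fix d assume "d \<in> symmetric_games n \<kappa> \<union> skew_symmetric_games n \<kappa>"
    then show "game_inner n \<kappa> (\<lambda>i x. c i x - Pj n c i x - Qj n c i x) d = 0"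
    proof
      assume d: "d \<in> symmetric_games n \<kappa>"
      have "game_inner n \<kappa> (Qj n c) d = 0"
        using orth_SK[OF assms(1) d Q] inner_comm by metis
      then show ?thesis by (simp add: inner_diff_left inner_Pj_sym[OF d])
    next
      assume d: "d \<in> skew_symmetric_games n \<kappa>"
      have "game_inner n \<kappa> (Pj n c) d = 0"
        using orth_SK[OF assms(1) P d] by simp
      then show ?thesis by (simp add: inner_diff_left inner_Qj_skew[OF d])
    qed
  qed
qed

lemma skew_zero:
  assumes "n > \<kappa> + 1" "c \<in> skew_symmetric_games n \<kappa>"
  shows "c = (\<lambda>i x. 0)"
proof (intro ext)
  fix i x
  show "c i x = 0"
  proof (cases "i \<in> {1..n} \<and> x \<in> profiles n \<kappa>")
    case False
    then show ?thesis using skew_games[OF assms(2)] unfolding games_def by auto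
  next
    case True
    then have i: "i \<in> {1..n}" and x: "x \<in> profiles n \<kappa>" by auto
    let ?A = "{1..n} - {i}"
    have xA: "x ` ?A \<subseteq> {1..\<kappa>}" using x unfolding profiles_def by auto
    have cA: "card ?A = n - 1" using i by simp
    have "\<not> inj_on x ?A"
    proof
      assume "inj_on x ?A"
      from card_inj_on_le[OF this xA] cA assms(1) show False by simp
    qed
    then obtain j k where jk: "j \<in> ?A" "k \<in> ?A" "j \<noteq> k" "x j = x k"
      unfolding inj_on_def by blast
    define \<tau> where "\<tau> = Transposition.transpose j k"
    have tp: "\<tau> permutes {1..n}" unfolding \<tau>_def using jk by (intro permutes_swap_id) auto
    have sg: "sign \<tau> = -1" unfolding \<tau>_def using jk by (simp add: sign_swap_id)
    have ti: "\<tau> i = i" unfolding \<tau>_def using jk by auto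
    have tx: "x \<circ> inv \<tau> = x"
    proof
      fix y show "(x \<circ> inv \<tau>) y = x y"
        unfolding \<tau>_def using jk(4) by (auto simp: Transposition.transpose_def)
    qed
    have "c i x = of_int (sign \<tau>) * act \<tau> c i x" by (rule skew_act[OF assms(2) tp i x])
    also have "\<dots> = - c i x" using sg ti tx by (simp add: act_def)
    finally show ?thesis by simp
  qed
qed

theorem proposition5p8:
  fixes n \<kappa> :: nat
  assumes "n \<ge> 2" and "\<kappa> \<ge> 1"
  shows "game_orth n \<kappa> (symmetric_games n \<kappa>) (skew_symmetric_games n \<kappa>)
    \<and> (n > \<kappa> + 1 \<longrightarrow> orth_dsum2 n \<kappa> (symmetric_games n \<kappa>) (asymmetric_games n \<kappa>))
    \<and> (n \<le> \<kappa> + 1 \<longrightarrow> orth_dsum3 n \<kappa> (symmetric_games n \<kappa>) (skew_symmetric_games n \<kappa>)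
                                   (asymmetric_games n \<kappa>))"
proof -
  have SK: "game_orth n \<kappa> (symmetric_games n \<kappa>) (skew_symmetric_games n \<kappa>)"
    unfolding game_orth_def using orth_SK[OF assms(1)] by blast
  have SE: "game_orth n \<kappa> (symmetric_games n \<kappa>) (asymmetric_games n \<kappa>)"
    unfolding game_orth_def asymmetric_games_def
  proof (intro ballI)
    fix a b assume a: "a \<in> symmetric_games n \<kappa>" and b: "b \<in> {c \<in> games n \<kappa>.
     \<forall>d \<in> symmetric_games n \<kappa> \<union> skew_symmetric_games n \<kappa>. game_inner n \<kappa> c d = 0}"
    then have "game_inner n \<kappa> b a = 0" by blast
    then show "game_inner n \<kappa> a b = 0" using inner_comm by metis
  qed
  have KE: "game_orth n \<kappa> (skew_symmetric_games n \<kappa>) (asymmetric_games n \<kappa>)"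
    unfolding game_orth_def asymmetric_games_def
  proof (intro ballI)
    fix a b assume a: "a \<in> skew_symmetric_games n \<kappa>" and b: "b \<in> {c \<in> games n \<kappa>.
     \<forall>d \<in> symmetric_games n \<kappa> \<union> skew_symmetric_games n \<kappa>. game_inner n \<kappa> c d = 0}"
    then have "game_inner n \<kappa> b a = 0" by blast
    then show "game_inner n \<kappa> a b = 0" using inner_comm by metis
  qed
  have Egames: "\<And>e. e \<in> asymmetric_games n \<kappa> \<Longrightarrow> e \<in> games n \<kappa>"
    unfolding asymmetric_games_def by simp
  have eq3: "games n \<kappa> = {(\<lambda>i x. a i x + b i x + c i x) | a b c.
      a \<in> symmetric_games n \<kappa> \<and> b \<in> skew_symmetric_games n \<kappa> \<and> c \<in> asymmetric_games n \<kappa>}"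
  proof
    show "games n \<kappa> \<subseteq> {(\<lambda>i x. a i x + b i x + c i x) | a b c.
      a \<in> symmetric_games n \<kappa> \<and> b \<in> skew_symmetric_games n \<kappa> \<and> c \<in> asymmetric_games n \<kappa>}"
    proof
      fix c assume c: "c \<in> games n \<kappa>"
      have eqc: "c = (\<lambda>i x. Pj n c i x + Qj n c i x + (c i x - Pj n c i x - Qj n c i x))" by simp
      show "c \<in> {(\<lambda>i x. a i x + b i x + c i x) | a b c.
      a \<in> symmetric_games n \<kappa> \<and> b \<in> skew_symmetric_games n \<kappa> \<and> c \<in> asymmetric_games n \<kappa>}"
        apply (rule CollectI, rule exI[where x="Pj n c"], rule exI[where x="Qj n c"],
          rule exI[where x="\<lambda>i x. c i x - Pj n c i x - Qj n c i x"])
        using eqc Pj_sym[OF c] Qj_skew[OF c] decomp[OF assms(1) c] by blast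
    qed
  next
    show "{(\<lambda>i x. a i x + b i x + c i x) | a b c.
      a \<in> symmetric_games n \<kappa> \<and> b \<in> skew_symmetric_games n \<kappa> \<and> c \<in> asymmetric_games n \<kappa>} \<subseteq> games n \<kappa>"
    proof
      fix f assume "f \<in> {(\<lambda>i x. a i x + b i x + c i x) | a b c.
      a \<in> symmetric_games n \<kappa> \<and> b \<in> skew_symmetric_games n \<kappa> \<and> c \<in> asymmetric_games n \<kappa>}"
      then obtain a b e where f: "f = (\<lambda>i x. a i x + b i x + e i x)" and
        ab: "a \<in> games n \<kappa>" "b \<in> games n \<kappa>" "e \<in> games n \<kappa>"
        using sym_games skew_games Egames by blast
      show "f \<in> games n \<kappa>" using ab unfolding f games_def by simp
    qed
  qed
  have eq2: "games n \<kappa> = {(\<lambda>i x. a i x + b i x) | a b.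
      a \<in> symmetric_games n \<kappa> \<and> b \<in> asymmetric_games n \<kappa>}" if nk: "n > \<kappa> + 1"
  proof
    show "games n \<kappa> \<subseteq> {(\<lambda>i x. a i x + b i x) | a b.
      a \<in> symmetric_games n \<kappa> \<and> b \<in> asymmetric_games n \<kappa>}"
    proof
      fix c assume c: "c \<in> games n \<kappa>"
      have Q0: "Qj n c = (\<lambda>i x. 0)" by (rule skew_zero[OF nk Qj_skew[OF c]])
      have eqc: "c = (\<lambda>i x. Pj n c i x + (c i x - Pj n c i x - Qj n c i x))" using Q0 by simp
      show "c \<in> {(\<lambda>i x. a i x + b i x) | a b.
      a \<in> symmetric_games n \<kappa> \<and> b \<in> asymmetric_games n \<kappa>}"
        apply (rule CollectI, rule exI[where x="Pj n c"],
          rule exI[where x="\<lambda>i x. c i x - Pj n c i x - Qj n c i x"])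
        using eqc Pj_sym[OF c] decomp[OF assms(1) c] by blast
    qed
  next
    show "{(\<lambda>i x. a i x + b i x) | a b.
      a \<in> symmetric_games n \<kappa> \<and> b \<in> asymmetric_games n \<kappa>} \<subseteq> games n \<kappa>"
    proof
      fix f assume "f \<in> {(\<lambda>i x. a i x + b i x) | a b.
      a \<in> symmetric_games n \<kappa> \<and> b \<in> asymmetric_games n \<kappa>}"
      then obtain a e where f: "f = (\<lambda>i x. a i x + e i x)" and
        ab: "a \<in> games n \<kappa>" "e \<in> games n \<kappa>"
        using sym_games Egames by blast
      show "f \<in> games n \<kappa>" using ab unfolding f games_def by simp
    qed
  qed
  show ?thesis
  proof (intro conjI impI)
    show "game_orth n \<kappa> (symmetric_games n \<kappa>) (skew_symmetric_games n \<kappa>)" by (rule SK)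
  next
    assume "n > \<kappa> + 1"
    then show "orth_dsum2 n \<kappa> (symmetric_games n \<kappa>) (asymmetric_games n \<kappa>)"
      unfolding orth_dsum2_def using eq2 SE by simp
  next
    show "orth_dsum3 n \<kappa> (symmetric_games n \<kappa>) (skew_symmetric_games n \<kappa>) (asymmetric_games n \<kappa>)"
      unfolding orth_dsum3_def using eq3 SK SE KE by simp
  qed
qed

end
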